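(* Let $\mathcal{F}$ satisfy the standard conditions and be closed under the minimizer operation. Let $\alpha_0\neq0,\alpha_1,\dots,\alpha_k\in\mathbb{R}_{\mathcal{F}}$. Then every real root of $P(X)=\alpha_0X^k+\alpha_1X^{k-1}+\cdots+\alpha_{k-1}X+\alpha_k$ belongs to $\mathbb{R}_{\mathcal{F}}$.
   Context: $\mathbb{N}=\{0,1,2,\dots\}$. $\mathcal{F}$ is a set of functions $\mathbb{N}^n\to\mathbb{N}$; it satisfies the standard conditions if it contains the zero function, the successor, all projections $P^n_i$, addition, multiplication and modified subtraction $x\dot- y=\max(x-y,0)$, and is closed under composition. For $f:\mathbb{N}^{k+1}\to\mathbb{N}$ the minimizer $\mu f:\mathbb{N}^{k+1}\to\mathbb{N}$ is $\mu f(x_1,\dots,x_k,x_{k+1})=\min\{j: f(x_1,\dots,x_k,j)=0\ \text{or}\ j=x_{k+1}\}$; $\mathcal{F}$ is closed under the minimizer operation if $f\in\mathcal{F}\Rightarrow\mu f\in\mathcal{F}$. An $\mathcal{F}$-sequence is $A:\mathbb{N}\to\mathbb{Q}$, $A(x)=\frac{f(x)-g(x)}{h(x)+1}$ with $f,g,h\in\mathcal{F}$. $\alpha\in\mathbb{R}$ is $\mathcal{F}$-computable if some $\mathcal{F}$-sequence $A$ satisfies $|A(x)-\alpha|\le\frac1{x+1}$ for all $x$; $\mathbb{R}_{\mathcal{F}}$ is the set of $\mathcal{F}$-computable reals. *)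

theory Defs
  imports Complex_Main
begin

text \<open>A class of number-theoretic functions is modelled as a family F indexed by arity:
  F n is a set of functions on argument lists; only their values on lists of length n matter.\<close>

type_synonym fclass = "nat \<Rightarrow> (nat list \<Rightarrow> nat) set"

definition fmem :: "fclass \<Rightarrow> nat \<Rightarrow> (nat list \<Rightarrow> nat) \<Rightarrow> bool" where
  "fmem F n f \<longleftrightarrow> (\<exists>g\<in>F n. \<forall>xs. length xs = n \<longrightarrow> g xs = f xs)"

definition standard_conditions :: "fclass \<Rightarrow> bool" where
  "standard_conditions F \<longleftrightarrow>
     fmem F 1 (\<lambda>xs. 0) \<and>
     fmem F 1 (\<lambda>xs. Suc (xs ! 0)) \<and>
     (\<forall>n i. i < n \<longrightarrow> fmem F n (\<lambda>xs. xs ! i)) \<and>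
     fmem F 2 (\<lambda>xs. xs ! 0 + xs ! 1) \<and>
     fmem F 2 (\<lambda>xs. xs ! 0 * xs ! 1) \<and>
     fmem F 2 (\<lambda>xs. xs ! 0 - xs ! 1) \<and>
     (\<forall>m n f gs. fmem F m f \<longrightarrow> length gs = m \<longrightarrow> (\<forall>g\<in>set gs. fmem F n g) \<longrightarrow>
        fmem F n (\<lambda>xs. f (map (\<lambda>g. g xs) gs)))"

definition minimizer :: "(nat list \<Rightarrow> nat) \<Rightarrow> nat list \<Rightarrow> nat" where
  "minimizer f xs = (LEAST j. f (butlast xs @ [j]) = 0 \<or> j = last xs)"

definition closed_minimizer :: "fclass \<Rightarrow> bool" where
  "closed_minimizer F \<longleftrightarrow>
     (\<forall>k f. fmem F (Suc k) f \<longrightarrow> fmem F (Suc k) (minimizer f))"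

definition F_sequence :: "fclass \<Rightarrow> (nat \<Rightarrow> rat) \<Rightarrow> bool" where
  "F_sequence F A \<longleftrightarrow> (\<exists>f g h. fmem F 1 f \<and> fmem F 1 g \<and> fmem F 1 h \<and>
     (\<forall>x. A x = (of_nat (f [x]) - of_nat (g [x])) / (of_nat (h [x]) + 1)))"

definition F_computable :: "fclass \<Rightarrow> real \<Rightarrow> bool" where
  "F_computable F \<alpha> \<longleftrightarrow> (\<exists>A. F_sequence F A \<and>
     (\<forall>x. \<bar>real_of_rat (A x) - \<alpha>\<bar> \<le> 1 / (real x + 1)))"

end

theory Submission
  imports Defs "HOL-Computational_Algebra.Polynomial"
begin


lemma fmem_cong: "fmem F n f \<Longrightarrow> (\<And>xs. length xs = n \<Longrightarrow> f xs = g xs) \<Longrightarrow> fmem F n g"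
  unfolding fmem_def by metis

definition zmem :: "fclass \<Rightarrow> nat \<Rightarrow> (nat list \<Rightarrow> int) \<Rightarrow> bool" where
  "zmem F n f \<longleftrightarrow> (\<exists>a b. fmem F n a \<and> fmem F n b \<and> (\<forall>xs. length xs = n \<longrightarrow> f xs = int (a xs) - int (b xs)))"

context
  fixes F :: fclass
  assumes SC: "standard_conditions F"
begin

lemma f_proj: "i < n \<Longrightarrow> fmem F n (\<lambda>xs. xs ! i)"
  using SC unfolding standard_conditions_def by blast

lemma f_comp: "fmem F m f \<Longrightarrow> length gs = m \<Longrightarrow> (\<forall>g\<in>set gs. fmem F n g) \<Longrightarrow> fmem F n (\<lambda>xs. f (map (\<lambda>g. g xs) gs))"
  using SC unfolding standard_conditions_def by blast

lemma f_comp1: "fmem F 1 f \<Longrightarrow> fmem F n g \<Longrightarrow> fmem F n (\<lambda>xs. f [g xs])"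
  using f_comp[of 1 f "[g]" n] by simp

lemma f_comp2: "fmem F 2 f \<Longrightarrow> fmem F n g \<Longrightarrow> fmem F n h \<Longrightarrow> fmem F n (\<lambda>xs. f [g xs, h xs])"
  using f_comp[of 2 f "[g,h]" n] by simp

lemma f_add: "fmem F n f \<Longrightarrow> fmem F n g \<Longrightarrow> fmem F n (\<lambda>xs. f xs + g xs)"
proof -
  assume a: "fmem F n f" "fmem F n g"
  have "fmem F 2 (\<lambda>xs. xs ! 0 + xs ! 1)" using SC unfolding standard_conditions_def by blast
  from f_comp2[OF this a] show ?thesis by simp
qed

lemma f_mult: "fmem F n f \<Longrightarrow> fmem F n g \<Longrightarrow> fmem F n (\<lambda>xs. f xs * g xs)"
proof -
  assume a: "fmem F n f" "fmem F n g"
  have "fmem F 2 (\<lambda>xs. xs ! 0 * xs ! 1)" using SC unfolding standard_conditions_def by blast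
  from f_comp2[OF this a] show ?thesis by simp
qed

lemma f_minus: "fmem F n f \<Longrightarrow> fmem F n g \<Longrightarrow> fmem F n (\<lambda>xs. f xs - g xs)"
proof -
  assume a: "fmem F n f" "fmem F n g"
  have "fmem F 2 (\<lambda>xs. xs ! 0 - xs ! 1)" using SC unfolding standard_conditions_def by blast
  from f_comp2[OF this a] show ?thesis by simp
qed

lemma f_Suc: "fmem F n f \<Longrightarrow> fmem F n (\<lambda>xs. Suc (f xs))"
proof -
  assume a: "fmem F n f"
  have "fmem F 1 (\<lambda>xs. Suc (xs ! 0))" using SC unfolding standard_conditions_def by blast
  from f_comp1[OF this a] show ?thesis by simp
qed

lemma f_const: "0 < n \<Longrightarrow> fmem F n (\<lambda>xs. c)"
proof (induction c)
  case 0
  have "fmem F 1 (\<lambda>xs. 0)" using SC unfolding standard_conditions_def by blast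
  from f_comp1[OF this f_proj[OF 0]] show ?case by simp
next
  case (Suc c)
  then show ?case using f_Suc by blast
qed

lemma f_pow: "0 < n \<Longrightarrow> fmem F n f \<Longrightarrow> fmem F n (\<lambda>xs. f xs ^ e)"
  by (induction e) (auto intro: f_const f_mult)

lemma z_int: "0 < n \<Longrightarrow> fmem F n f \<Longrightarrow> zmem F n (\<lambda>xs. int (f xs))"
  unfolding zmem_def using f_const[of n 0] by fastforce

lemma z_const: "0 < n \<Longrightarrow> zmem F n (\<lambda>xs. c)"
  unfolding zmem_def
  by (rule exI[of _ "\<lambda>xs. nat c"], rule exI[of _ "\<lambda>xs. nat (- c)"]) (auto intro: f_const)

lemma z_add: "zmem F n f \<Longrightarrow> zmem F n g \<Longrightarrow> zmem F n (\<lambda>xs. f xs + g xs)"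
proof -
  assume "zmem F n f" "zmem F n g"
  then obtain a b a' b' where h: "fmem F n a" "fmem F n b" "fmem F n a'" "fmem F n b'"
    "\<forall>xs. length xs = n \<longrightarrow> f xs = int (a xs) - int (b xs)"
    "\<forall>xs. length xs = n \<longrightarrow> g xs = int (a' xs) - int (b' xs)"
    unfolding zmem_def by blast
  show ?thesis unfolding zmem_def
    by (rule exI[of _ "\<lambda>xs. a xs + a' xs"], rule exI[of _ "\<lambda>xs. b xs + b' xs"]) (use h in \<open>auto intro: f_add\<close>)
qed

lemma z_sub: "zmem F n f \<Longrightarrow> zmem F n g \<Longrightarrow> zmem F n (\<lambda>xs. f xs - g xs)"
proof -
  assume "zmem F n f" "zmem F n g"
  then obtain a b a' b' where h: "fmem F n a" "fmem F n b" "fmem F n a'" "fmem F n b'"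
    "\<forall>xs. length xs = n \<longrightarrow> f xs = int (a xs) - int (b xs)"
    "\<forall>xs. length xs = n \<longrightarrow> g xs = int (a' xs) - int (b' xs)"
    unfolding zmem_def by blast
  show ?thesis unfolding zmem_def
    by (rule exI[of _ "\<lambda>xs. a xs + b' xs"], rule exI[of _ "\<lambda>xs. b xs + a' xs"]) (use h in \<open>auto intro: f_add\<close>)
qed

lemma z_mult: "zmem F n f \<Longrightarrow> zmem F n g \<Longrightarrow> zmem F n (\<lambda>xs. f xs * g xs)"
proof -
  assume "zmem F n f" "zmem F n g"
  then obtain a b a' b' where h: "fmem F n a" "fmem F n b" "fmem F n a'" "fmem F n b'"
    "\<forall>xs. length xs = n \<longrightarrow> f xs = int (a xs) - int (b xs)"
    "\<forall>xs. length xs = n \<longrightarrow> g xs = int (a' xs) - int (b' xs)"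
    unfolding zmem_def by blast
  show ?thesis unfolding zmem_def
    apply (rule exI[of _ "\<lambda>xs. a xs * a' xs + b xs * b' xs"], rule exI[of _ "\<lambda>xs. a xs * b' xs + b xs * a' xs"])
    apply (intro conjI allI impI f_add f_mult h(1-4))
    apply (simp add: h(5,6) algebra_simps)
    done
qed

lemma z_pow: "0 < n \<Longrightarrow> zmem F n f \<Longrightarrow> zmem F n (\<lambda>xs. f xs ^ e)"
  by (induction e) (auto intro: z_const z_mult)

lemma z_sum: "finite S \<Longrightarrow> 0 < n \<Longrightarrow> (\<And>i. i \<in> S \<Longrightarrow> zmem F n (f i)) \<Longrightarrow> zmem F n (\<lambda>xs. \<Sum>i\<in>S. f i xs)"
  by (induction S rule: finite_induct) (auto intro: z_const z_add)

lemma z_prod: "finite S \<Longrightarrow> 0 < n \<Longrightarrow> (\<And>i. i \<in> S \<Longrightarrow> zmem F n (f i)) \<Longrightarrow> zmem F n (\<lambda>xs. \<Prod>i\<in>S. f i xs)"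
  by (induction S rule: finite_induct) (auto intro: z_const z_mult)

lemma z_test: "zmem F n f \<Longrightarrow> \<exists>g. fmem F n g \<and> (\<forall>xs. length xs = n \<longrightarrow> (g xs = 0 \<longleftrightarrow> f xs \<le> 0))"
proof -
  assume "zmem F n f"
  then obtain a b where h: "fmem F n a" "fmem F n b"
    "\<forall>xs. length xs = n \<longrightarrow> f xs = int (a xs) - int (b xs)"
    unfolding zmem_def by blast
  show ?thesis
    by (rule exI[of _ "\<lambda>xs. a xs - b xs"]) (use h in \<open>auto intro: f_minus\<close>)
qed

lemma z_split: "zmem F n f \<Longrightarrow> \<exists>a b. fmem F n a \<and> fmem F n b \<and> (\<forall>xs. length xs = n \<longrightarrow> f xs = int (a xs) - int (b xs))"
  unfolding zmem_def by blast

end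



lemma root_bounds:
  fixes \<alpha> :: "nat \<Rightarrow> real" and x :: real
  assumes a0: "\<alpha> 0 \<noteq> 0" and rt: "(\<Sum>i\<le>k. \<alpha> i * x ^ (k - i)) = 0"
  shows "\<exists>m c C \<delta>. 0 < m \<and> 0 < c \<and> 0 \<le> C \<and> 0 < \<delta> \<and> \<delta> \<le> 1 \<and>
    (\<forall>y. \<bar>y - x\<bar> \<le> \<delta> \<longrightarrow> c * \<bar>y - x\<bar> ^ m \<le> \<bar>\<Sum>i\<le>k. \<alpha> i * y ^ (k - i)\<bar>
         \<and> \<bar>\<Sum>i\<le>k. \<alpha> i * y ^ (k - i)\<bar> \<le> C * \<bar>y - x\<bar>)"
proof -
  define p where "p = (\<Sum>i\<le>k. monom (\<alpha> i) (k - i))"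
  have pv: "poly p y = (\<Sum>i\<le>k. \<alpha> i * y ^ (k - i))" for y
    unfolding p_def by (simp add: poly_sum poly_monom)
  have "coeff p k = (\<Sum>i\<le>k. if k - i = k then \<alpha> i else 0)"
    unfolding p_def by (simp add: coeff_sum coeff_monom)
  also have "\<dots> = (\<Sum>i\<le>k. if i = 0 then \<alpha> i else 0)"
    by (rule sum.cong) auto
  also have "\<dots> = \<alpha> 0" by simp
  finally have "p \<noteq> 0" using a0 by auto
  define m where "m = order x p"
  obtain q where pq: "p = [:- x, 1:] ^ m * q" and nd: "\<not> [:- x, 1:] dvd q"
    using order_decomp[OF \<open>p \<noteq> 0\<close>, of x] unfolding m_def by blast
  have qx: "poly q x \<noteq> 0" using nd poly_eq_0_iff_dvd by blast
  have "m \<noteq> 0" using order_root[of p x] \<open>p \<noteq> 0\<close> rt pv unfolding m_def by simp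
  have pf: "poly p y = (y - x) ^ m * poly q y" for y
    using pq by (simp add: poly_power)
  define c where "c = \<bar>poly q x\<bar> / 2"
  have "c > 0" using qx unfolding c_def by simp
  have "isCont (poly q) x" by simp
  then have "(poly q) \<midarrow>x\<rightarrow> poly q x" by (simp add: isCont_def)
  from LIM_D[OF this \<open>c > 0\<close>] obtain s where s: "s > 0"
    "\<forall>y. y \<noteq> x \<and> norm (y - x) < s \<longrightarrow> norm (poly q y - poly q x) < c" by blast
  define \<delta> where "\<delta> = min 1 (s / 2)"
  have lowq: "c \<le> \<bar>poly q y\<bar>" if "\<bar>y - x\<bar> \<le> \<delta>" for y
  proof (cases "y = x")
    case True then show ?thesis unfolding c_def by simp
  next
    case False
    have "\<bar>y - x\<bar> < s" using that s(1) unfolding \<delta>_def by linarith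
    then have "\<bar>poly q y - poly q x\<bar> < c" using s(2) False by auto
    then show ?thesis unfolding c_def by linarith
  qed
  obtain C0 where C0: "\<forall>y. x - 1 \<le> y \<and> y \<le> x + 1 \<longrightarrow> \<bar>poly q y\<bar> \<le> C0"
    using isCont_bounded[of "x - 1" "x + 1" "\<lambda>y. \<bar>poly q y\<bar>"] by auto
  define C where "C = max C0 0"
  show ?thesis
  proof (intro exI conjI allI impI)
    show "0 < m" using \<open>m \<noteq> 0\<close> by simp
    show "0 < c" by fact
    show "0 \<le> C" unfolding C_def by simp
    show "0 < \<delta>" using s unfolding \<delta>_def by simp
    show "\<delta> \<le> 1" unfolding \<delta>_def by simp
    fix y assume y: "\<bar>y - x\<bar> \<le> \<delta>"
    have y1: "\<bar>y - x\<bar> \<le> 1" using y unfolding \<delta>_def by linarith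
    have eq: "\<bar>\<Sum>i\<le>k. \<alpha> i * y ^ (k - i)\<bar> = \<bar>y - x\<bar> ^ m * \<bar>poly q y\<bar>"
      using pv[of y] pf[of y] by (metis abs_mult power_abs)
    show "c * \<bar>y - x\<bar> ^ m \<le> \<bar>\<Sum>i\<le>k. \<alpha> i * y ^ (k - i)\<bar>"
      unfolding eq using lowq[OF y] by (simp add: mult.commute mult_right_mono)
    have "x - 1 \<le> y \<and> y \<le> x + 1" using y1 by linarith
    then have "\<bar>poly q y\<bar> \<le> C" using C0 unfolding C_def by force
    moreover have "\<bar>y - x\<bar> ^ m \<le> \<bar>y - x\<bar>"
      using y1 \<open>m \<noteq> 0\<close> power_decreasing[of 1 m "\<bar>y - x\<bar>"] by simp
    ultimately show "\<bar>\<Sum>i\<le>k. \<alpha> i * y ^ (k - i)\<bar> \<le> C * \<bar>y - x\<bar>"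
      unfolding eq by (metis abs_ge_zero mult.commute mult_mono zero_le_power)
  qed
qed



lemma ZW_eq:
  fixes a d :: "nat \<Rightarrow> int" and w N :: int
  assumes d: "\<forall>i\<le>k. d i \<noteq> 0" and N: "N \<noteq> 0"
  shows "real_of_int (\<Sum>i\<le>k. a i * (\<Prod>l\<in>{..k}-{i}. d l) * w ^ (k - i) * N ^ i) /
           real_of_int ((\<Prod>l\<le>k. d l) * N ^ k)
         = (\<Sum>i\<le>k. (real_of_int (a i) / real_of_int (d i)) * (real_of_int w / real_of_int N) ^ (k - i))"
proof -
  have "real_of_int (\<Sum>i\<le>k. a i * (\<Prod>l\<in>{..k}-{i}. d l) * w ^ (k - i) * N ^ i) /
           real_of_int ((\<Prod>l\<le>k. d l) * N ^ k)
       = (\<Sum>i\<le>k. real_of_int (a i * (\<Prod>l\<in>{..k}-{i}. d l) * w ^ (k - i) * N ^ i) /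
           real_of_int ((\<Prod>l\<le>k. d l) * N ^ k))"
    by (simp add: sum_divide_distrib)
  also have "\<dots> = (\<Sum>i\<le>k. (real_of_int (a i) / real_of_int (d i)) * (real_of_int w / real_of_int N) ^ (k - i))"
  proof (rule sum.cong[OF refl])
    fix i assume i: "i \<in> {..k}"
    define Q where "Q = (\<Prod>l\<in>{..k}-{i}. d l)"
    have Q0: "Q \<noteq> 0" unfolding Q_def using d by (auto simp: prod_zero_iff)
    have PQ: "(\<Prod>l\<le>k. d l) = d i * Q" unfolding Q_def using i by (simp add: prod.remove)
    have Nk: "N ^ k = N ^ (k - i) * N ^ i" using i by (simp add: power_add[symmetric])
    have di: "d i \<noteq> 0" using d i by auto
    show "real_of_int (a i * Q * w ^ (k - i) * N ^ i) / real_of_int ((\<Prod>l\<le>k. d l) * N ^ k)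
        = (real_of_int (a i) / real_of_int (d i)) * (real_of_int w / real_of_int N) ^ (k - i)"
      unfolding PQ Nk using Q0 di N by (simp add: field_simps power_divide)
  qed
  finally show ?thesis .
qed

lemma Fc_D: "F_computable F a \<Longrightarrow> \<exists>f g h. fmem F 1 f \<and> fmem F 1 g \<and> fmem F 1 h \<and>
   (\<forall>n. \<bar>(real (f [n]) - real (g [n])) / (real (h [n]) + 1) - a\<bar> \<le> 1 / (real n + 1))"
  unfolding F_computable_def F_sequence_def
  by (auto simp: of_rat_divide of_rat_diff of_rat_add) blast

lemma Fc_I: "fmem F 1 f \<Longrightarrow> fmem F 1 g \<Longrightarrow> fmem F 1 h \<Longrightarrow>
   (\<forall>n. \<bar>(real (f [n]) - real (g [n])) / (real (h [n]) + 1) - a\<bar> \<le> 1 / (real n + 1)) \<Longrightarrow> F_computable F a"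
  unfolding F_computable_def F_sequence_def
  apply (rule exI[of _ "\<lambda>n. (of_nat (f [n]) - of_nat (g [n])) / (of_nat (h [n]) + 1)"])
  apply (auto simp: of_rat_divide of_rat_diff of_rat_add)
  done



theorem mainTheorem13:
  fixes F :: fclass and k :: nat and \<alpha> :: "nat \<Rightarrow> real" and x :: real
  assumes "standard_conditions F"
    and "closed_minimizer F"
    and "\<alpha> 0 \<noteq> 0"
    and "\<forall>i\<le>k. F_computable F (\<alpha> i)"
    and "(\<Sum>i\<le>k. \<alpha> i * x ^ (k - i)) = 0"
  shows "F_computable F x"
proof -
  note SC = assms(1)
  have "\<forall>i. \<exists>t. i \<le> k \<longrightarrow> (fmem F 1 (fst t) \<and> fmem F 1 (fst (snd t)) \<and> fmem F 1 (snd (snd t)) \<and>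
     (\<forall>n. \<bar>(real (fst t [n]) - real (fst (snd t) [n])) / (real (snd (snd t) [n]) + 1) - \<alpha> i\<bar> \<le> 1 / (real n + 1)))"
  proof
    fix i
    show "\<exists>t. i \<le> k \<longrightarrow> (fmem F 1 (fst t) \<and> fmem F 1 (fst (snd t)) \<and> fmem F 1 (snd (snd t)) \<and>
     (\<forall>n. \<bar>(real (fst t [n]) - real (fst (snd t) [n])) / (real (snd (snd t) [n]) + 1) - \<alpha> i\<bar> \<le> 1 / (real n + 1)))"
    proof (cases "i \<le> k")
      case True
      then obtain f g h where "fmem F 1 f \<and> fmem F 1 g \<and> fmem F 1 h \<and>
   (\<forall>n. \<bar>(real (f [n]) - real (g [n])) / (real (h [n]) + 1) - \<alpha> i\<bar> \<le> 1 / (real n + 1))"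
        using Fc_D assms(4) by blast
      then show ?thesis by (intro exI[of _ "(f, g, h)"]) simp
    qed simp
  qed
  from choice[OF this] obtain t where t: "\<And>i. i \<le> k \<Longrightarrow> (fmem F 1 (fst (t i)) \<and> fmem F 1 (fst (snd (t i))) \<and> fmem F 1 (snd (snd (t i))) \<and>
     (\<forall>n. \<bar>(real (fst (t i) [n]) - real (fst (snd (t i)) [n])) / (real (snd (snd (t i)) [n]) + 1) - \<alpha> i\<bar> \<le> 1 / (real n + 1)))"
    by blast
  define fs where "fs = (\<lambda>i. fst (t i))"
  define gs where "gs = (\<lambda>i. fst (snd (t i)))"
  define hs where "hs = (\<lambda>i. snd (snd (t i)))"
  have FS: "fmem F 1 (fs i)" "fmem F 1 (gs i)" "fmem F 1 (hs i)"
    "\<And>n. \<bar>(real (fs i [n]) - real (gs i [n])) / (real (hs i [n]) + 1) - \<alpha> i\<bar> \<le> 1 / (real n + 1)"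
    if "i \<le> k" for i using t[OF that] unfolding fs_def gs_def hs_def by auto

  obtain m c C \<delta> where m: "0 < m" and c: "0 < c" and C: "0 \<le> C" and d: "0 < \<delta>" "\<delta> \<le> 1"
    and bnd: "\<And>y. \<bar>y - x\<bar> \<le> \<delta> \<Longrightarrow> c * \<bar>y - x\<bar> ^ m \<le> \<bar>\<Sum>i\<le>k. \<alpha> i * y ^ (k - i)\<bar>
         \<and> \<bar>\<Sum>i\<le>k. \<alpha> i * y ^ (k - i)\<bar> \<le> C * \<bar>y - x\<bar>"
    using root_bounds[OF assms(3) assms(5)] by blast
  define P where "P = (\<lambda>y. \<Sum>i\<le>k. \<alpha> i * y ^ (k - i))"
  define B where "B = \<bar>x\<bar> + 1"
  define E where "E = real (k + 1) * B ^ k"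
  have B1: "1 \<le> B" unfolding B_def by simp
  have E1: "1 \<le> E"
  proof -
    have "1 \<le> B ^ k" using B1 by (simp add: one_le_power)
    moreover have "1 \<le> real (k + 1)" by simp
    ultimately show ?thesis unfolding E_def using mult_mono[of 1 "real (k+1)" 1 "B ^ k"] by simp
  qed
  define R where "R = nat \<lceil>2 / c\<rceil>"
  have R: "2 / c \<le> real R" unfolding R_def by (simp add: real_nat_ceiling_ge)
  have "0 < 2 / c" using c by simp
  then have R0: "0 < R" using R by linarith
  define S where "S = nat \<lceil>2 * C * real R\<rceil> + 1"
  have S: "2 * C * real R \<le> real S" unfolding S_def
    using real_nat_ceiling_ge[of "2 * C * real R"] by simp
  have S0: "0 < S" unfolding S_def by simp
  define T where "T = nat \<lceil>2 * E * real R\<rceil>"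
  have T: "2 * E * real R \<le> real T" unfolding T_def by (simp add: real_nat_ceiling_ge)
  define D where "D = nat \<lceil>1 / \<delta>\<rceil>"
  have D: "1 / \<delta> \<le> real D" unfolding D_def by (simp add: real_nat_ceiling_ge)
  have "0 < 1 / \<delta>" using d by simp
  then have D0: "0 < D" using D by linarith
  have Dd: "1 / real D \<le> \<delta>" using D d D0 by (simp add: divide_le_eq mult.commute pos_divide_le_eq)
  define u where "u = \<lfloor>x * real D\<rfloor>"
  have u1: "real_of_int u \<le> x * real D" unfolding u_def by simp
  have u2: "x * real D < real_of_int u + 1" unfolding u_def by linarith
  define sf where "sf = (\<lambda>n::nat. S * (n + 1) ^ m)"
  define Mf where "Mf = (\<lambda>n::nat. T * (n + 1) ^ m)"
  define Kf where "Kf = (\<lambda>n::nat. R * (n + 1) ^ m)"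
  define Nf where "Nf = (\<lambda>n::nat. D * sf n)"
  have sf0: "0 < sf n" for n unfolding sf_def using S0 by simp
  have Kf0: "0 < Kf n" for n unfolding Kf_def using R0 by simp
  have Nf0: "0 < Nf n" for n unfolding Nf_def using D0 sf0 by simp

  define ap where "ap = (\<lambda>i n. (real (fs i [Mf n]) - real (gs i [Mf n])) / (real (hs i [Mf n]) + 1))"
  have atb: "\<bar>ap i n - \<alpha> i\<bar> \<le> 1 / (real (Mf n) + 1)" if "i \<le> k" for i n
    using FS(4)[OF that, of "Mf n"] unfolding ap_def by simp
  define Pt where "Pt = (\<lambda>n y. \<Sum>i\<le>k. ap i n * y ^ (k - i))"
  have approx: "\<bar>Pt n y - P y\<bar> \<le> E / (real (Mf n) + 1)" if y: "\<bar>y\<bar> \<le> B" for n y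
  proof -
    have "Pt n y - P y = (\<Sum>i\<le>k. (ap i n - \<alpha> i) * y ^ (k - i))"
      unfolding Pt_def P_def by (simp add: sum_subtractf left_diff_distrib)
    also have "\<bar>\<dots>\<bar> \<le> (\<Sum>i\<le>k. \<bar>(ap i n - \<alpha> i) * y ^ (k - i)\<bar>)" by (rule sum_abs)
    also have "\<dots> \<le> (\<Sum>i\<le>k. (1 / (real (Mf n) + 1)) * B ^ k)"
    proof (rule sum_mono)
      fix i assume i: "i \<in> {..k}"
      have "\<bar>y\<bar> ^ (k - i) \<le> B ^ (k - i)" using y by (simp add: power_mono)
      also have "\<dots> \<le> B ^ k" using B1 by (simp add: power_increasing)
      finally have "\<bar>y ^ (k - i)\<bar> \<le> B ^ k" by (simp add: power_abs)
      then show "\<bar>(ap i n - \<alpha> i) * y ^ (k - i)\<bar> \<le> (1 / (real (Mf n) + 1)) * B ^ k"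
        unfolding abs_mult using atb[of i n] i by (intro mult_mono) auto
    qed
    also have "\<dots> = E / (real (Mf n) + 1)" unfolding E_def by simp
    finally show ?thesis .
  qed
  have Ebound: "E / (real (Mf n) + 1) \<le> 1 / (2 * real (Kf n))" for n
  proof -
    have "2 * E * real (Kf n) = (2 * E * real R) * (real n + 1) ^ m" unfolding Kf_def by (simp add: add.commute)
    also have "\<dots> \<le> real T * (real n + 1) ^ m" using T by (intro mult_right_mono) auto
    also have "\<dots> = real (Mf n)" unfolding Mf_def by (simp add: add.commute)
    finally have "E * (2 * real (Kf n)) \<le> real (Mf n) + 1" by simp
    then show ?thesis using Kf0[of n] by (simp add: divide_simps)
  qed

  define az where "az = (\<lambda>i xs. int (fs i [Mf (xs ! 0)]) - int (gs i [Mf (xs ! 0)]))"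
  define dz where "dz = (\<lambda>i xs. int (hs i [Mf (xs ! 0)]) + 1)"
  define wz where "wz = (\<lambda>xs. u * int (sf (xs ! 0)) + int (xs ! 1))"
  define Nz where "Nz = (\<lambda>xs. int (Nf (xs ! 0)))"
  define Zz where "Zz = (\<lambda>xs. \<Sum>i\<le>k. az i xs * (\<Prod>l\<in>{..k}-{i}. dz l xs) * wz xs ^ (k - i) * Nz xs ^ i)"
  define Wz where "Wz = (\<lambda>xs. (\<Prod>l\<le>k. dz l xs) * Nz xs ^ k)"
  define Kz where "Kz = (\<lambda>xs. int (Kf (xs ! 0)))"
  define tz where "tz = (\<lambda>xs. (Zz xs * Kz xs) ^ 2 - Wz xs ^ 2)"
  have p0: "fmem F 2 (\<lambda>xs. xs ! 0)" "fmem F 2 (\<lambda>xs. xs ! 1)" using f_proj[OF SC] by auto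
  have fM: "fmem F 2 (\<lambda>xs. Mf (xs ! 0))" unfolding Mf_def
    by (intro f_mult[OF SC] f_const[OF SC] f_pow[OF SC] f_add[OF SC] p0) auto
  have fS: "fmem F n (\<lambda>xs. sf (xs ! 0))" if "0 < n" for n unfolding sf_def
    by (intro f_mult[OF SC] f_const[OF SC] f_pow[OF SC] f_add[OF SC] f_proj[OF SC] that)
  have fN: "fmem F n (\<lambda>xs. Nf (xs ! 0))" if "0 < n" for n unfolding Nf_def
    by (intro f_mult[OF SC] f_const[OF SC] fS that)
  have fK: "fmem F 2 (\<lambda>xs. Kf (xs ! 0))" unfolding Kf_def
    by (intro f_mult[OF SC] f_const[OF SC] f_pow[OF SC] f_add[OF SC] p0) auto
  have zA: "zmem F 2 (az i)" if "i \<le> k" for i unfolding az_def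
    by (intro z_sub[OF SC] z_int[OF SC] f_comp1[OF SC] FS that fM) auto
  have zD: "zmem F 2 (dz i)" if "i \<le> k" for i unfolding dz_def
    by (intro z_add[OF SC] z_int[OF SC] z_const[OF SC] f_comp1[OF SC] FS that fM) auto
  have zW: "zmem F 2 wz" unfolding wz_def
    by (intro z_add[OF SC] z_mult[OF SC] z_int[OF SC] z_const[OF SC] fS p0) auto
  have zN: "zmem F 2 Nz" unfolding Nz_def
    by (intro z_int[OF SC] fN) auto
  have zK: "zmem F 2 Kz" unfolding Kz_def
    by (intro z_int[OF SC] fK) auto
  have zZ: "zmem F 2 Zz" unfolding Zz_def
    by (intro z_sum[OF SC] z_mult[OF SC] z_prod[OF SC] z_pow[OF SC] zA zD zW zN) auto
  have zWW: "zmem F 2 Wz" unfolding Wz_def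
    by (intro z_mult[OF SC] z_prod[OF SC] z_pow[OF SC] zD zN) auto
  have zT: "zmem F 2 tz" unfolding tz_def
    by (intro z_sub[OF SC] z_mult[OF SC] z_pow[OF SC] zZ zK zWW) auto
  obtain tg where tg: "fmem F 2 tg" "\<And>xs. length xs = 2 \<Longrightarrow> (tg xs = 0 \<longleftrightarrow> tz xs \<le> 0)"
    using z_test[OF SC zT] by blast
  have "fmem F (Suc 1) (minimizer tg)" using assms(2) tg(1) unfolding closed_minimizer_def
    by (metis Suc_1)
  then have fmin: "fmem F 2 (minimizer tg)" by (metis Suc_1)
  define jn where "jn = (\<lambda>n. minimizer tg [n, sf n])"
  have jn_eq: "jn n = (LEAST j. tg [n, j] = 0 \<or> j = sf n)" for n
    unfolding jn_def minimizer_def by simp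
  have fj: "fmem F 1 (\<lambda>xs. jn (xs ! 0))" unfolding jn_def
    by (intro f_comp2[OF SC fmin] f_proj[OF SC] fS) auto
  have "zmem F 1 (\<lambda>xs. u * int (sf (xs ! 0)) + int (jn (xs ! 0)))"
    by (intro z_add[OF SC] z_mult[OF SC] z_int[OF SC] z_const[OF SC] fS fj) auto
  from z_split[OF SC this] obtain na nb where nab: "fmem F 1 na" "fmem F 1 nb"
    "\<And>xs. length xs = 1 \<Longrightarrow> u * int (sf (xs ! 0)) + int (jn (xs ! 0)) = int (na xs) - int (nb xs)"
    by blast
  have fden: "fmem F 1 (\<lambda>xs. Nf (xs ! 0) - 1)"
    by (intro f_minus[OF SC] fN f_const[OF SC]) auto

  have link: "tz [n, j] \<le> 0 \<longleftrightarrow>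
      \<bar>Pt n ((real_of_int u * real (sf n) + real j) / real (Nf n))\<bar> \<le> 1 / real (Kf n)" for n j
  proof -
    define xs where "xs = [n, j]"
    have d0: "\<forall>i\<le>k. dz i xs \<noteq> 0" unfolding dz_def by simp
    have N0: "Nz xs \<noteq> 0" unfolding Nz_def xs_def using Nf0[of n] by simp
    have W0: "Wz xs > 0" unfolding Wz_def using N0 Nf0[of n]
      by (simp add: Nz_def xs_def dz_def prod_pos)
    have K0: "Kz xs > 0" unfolding Kz_def xs_def using Kf0[of n] by simp
    have ZW: "real_of_int (Zz xs) / real_of_int (Wz xs)
        = Pt n ((real_of_int u * real (sf n) + real j) / real (Nf n))"
      unfolding Zz_def Wz_def ZW_eq[OF d0 N0] Pt_def
      by (simp add: az_def dz_def ap_def wz_def Nz_def xs_def)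
    have "tz xs \<le> 0 \<longleftrightarrow> (Zz xs * Kz xs)\<^sup>2 \<le> (Wz xs)\<^sup>2" unfolding tz_def by simp
    also have "\<dots> \<longleftrightarrow> \<bar>Zz xs * Kz xs\<bar> \<le> \<bar>Wz xs\<bar>" by (simp add: abs_le_square_iff)
    also have "\<dots> \<longleftrightarrow> \<bar>Zz xs\<bar> * Kz xs \<le> Wz xs"
      using W0 K0 by (simp add: abs_mult)
    also have "\<dots> \<longleftrightarrow> \<bar>real_of_int (Zz xs)\<bar> * real_of_int (Kz xs) \<le> real_of_int (Wz xs)"
      by (metis of_int_abs of_int_le_iff of_int_mult)
    also have "\<dots> \<longleftrightarrow> \<bar>real_of_int (Zz xs) / real_of_int (Wz xs)\<bar> \<le> 1 / real_of_int (Kz xs)"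
      using W0 K0 by (simp add: abs_divide divide_simps)
    finally show ?thesis unfolding ZW using xs_def by (simp add: Kz_def)
  qed
  have main: "\<bar>(real_of_int u * real (sf n) + real (jn n)) / real (Nf n) - x\<bar> \<le> 1 / (real n + 1)" for n
  proof -
    define X where "X = real (Nf n)"
    have X0: "0 < X" unfolding X_def using Nf0[of n] by simp
    have XD: "X = real D * real (sf n)" unfolding X_def Nf_def by simp
    have sfp: "0 < real (sf n)" using sf0[of n] by simp
    define fl where "fl = \<lfloor>x * X\<rfloor>"
    have ux: "real_of_int u * real (sf n) \<le> x * X" using u1 sfp unfolding XD
      by (metis mult.assoc mult.commute mult_right_mono less_imp_le)
    have ux2: "x * X < (real_of_int u + 1) * real (sf n)" using u2 sfp unfolding XD
      by (metis mult.assoc mult.commute mult_strict_right_mono)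
    have fl1: "u * int (sf n) \<le> fl" unfolding fl_def using ux by (simp add: le_floor_iff)
    have fl2: "fl < (u + 1) * int (sf n)" unfolding fl_def using ux2 by (simp add: floor_less_iff)
    define js where "js = nat (fl - u * int (sf n))"
    have js1: "int js = fl - u * int (sf n)" unfolding js_def using fl1 by simp
    have js2: "js \<le> sf n" using js1 fl2 by (simp add: algebra_simps)
    define ys where "ys = (real_of_int u * real (sf n) + real js) / X"
    have ysfl: "ys = real_of_int fl / X" unfolding ys_def
      using arg_cong[OF js1, of real_of_int] by simp
    have "real_of_int fl \<le> x * X" "x * X < real_of_int fl + 1" unfolding fl_def by linarith+
    then have ysx: "\<bar>ys - x\<bar> \<le> 1 / X" unfolding ysfl using X0
      by (simp add: abs_le_iff divide_simps) 
    have "real D \<le> X" unfolding XD using sf0[of n] D0 by simp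
    then have "1 / X \<le> 1 / real D" using D0 by (simp add: frac_le)
    then have X\<delta>: "1 / X \<le> \<delta>" using Dd by linarith
    have X1: "1 / X \<le> 1" using X\<delta> d by linarith
    have "\<bar>P ys\<bar> \<le> C * \<bar>ys - x\<bar>" using bnd[of ys] ysx X\<delta> unfolding P_def by auto
    also have "\<dots> \<le> C * (1 / X)" using ysx C by (intro mult_left_mono) auto
    also have "\<dots> \<le> 1 / (2 * real (Kf n))"
    proof -
      have "2 * C * real (Kf n) = (2 * C * real R) * (real n + 1) ^ m" unfolding Kf_def by (simp add: add.commute)
      also have "\<dots> \<le> real S * (real n + 1) ^ m" using S by (intro mult_right_mono) auto
      also have "\<dots> = real (sf n)" unfolding sf_def by (simp add: add.commute)
      also have "\<dots> \<le> X" unfolding XD using D0 sfp by simp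
      finally have "C * (2 * real (Kf n)) \<le> X" by simp
      then show ?thesis using X0 Kf0[of n] by (simp add: divide_simps)
    qed
    finally have Pys: "\<bar>P ys\<bar> \<le> 1 / (2 * real (Kf n))" .
    have "\<bar>ys\<bar> \<le> B" unfolding B_def using ysx X1 by linarith
    from approx[OF this, of n] Ebound[of n] Pys
    have "\<bar>Pt n ys\<bar> \<le> 1 / real (Kf n)" by linarith
    then have "tz [n, js] \<le> 0" using link[of n js] unfolding ys_def X_def by simp
    then have tgjs: "tg [n, js] = 0" using tg(2)[of "[n, js]"] by simp
    have jle: "jn n \<le> js" unfolding jn_eq using tgjs by (intro Least_le) simp
    have "tg [n, jn n] = 0 \<or> jn n = sf n" unfolding jn_eq by (rule LeastI[of _ "sf n"]) simp
    then have "tg [n, jn n] = 0" using jle js2 tgjs by auto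
    then have "tz [n, jn n] \<le> 0" using tg(2)[of "[n, jn n]"] by simp
    then have Pt1: "\<bar>Pt n y\<bar> \<le> 1 / real (Kf n)" if "y = (real_of_int u * real (sf n) + real (jn n)) / X" for y
      using link[of n "jn n"] that unfolding X_def by simp
    define y where "y = (real_of_int u * real (sf n) + real (jn n)) / X"
    have jsf: "real (jn n) \<le> real (sf n)" using jle js2 by simp
    have yX: "y * X = real_of_int u * real (sf n) + real (jn n)" unfolding y_def using X0 by simp
    have "\<bar>y * X - x * X\<bar> \<le> real (sf n)"
      unfolding yX using ux ux2 jsf by (simp add: abs_le_iff algebra_simps)
    moreover have "\<bar>y * X - x * X\<bar> = \<bar>y - x\<bar> * X" using X0
      by (metis abs_mult abs_of_pos left_diff_distrib)
    ultimately have "\<bar>y - x\<bar> * X \<le> real (sf n)" by simp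
    then have "\<bar>y - x\<bar> \<le> real (sf n) / X" using X0 by (simp add: pos_le_divide_eq)
    also have "real (sf n) / X = 1 / real D" unfolding XD using sfp by simp
    finally have yx: "\<bar>y - x\<bar> \<le> \<delta>" using Dd by linarith
    have "\<bar>y\<bar> \<le> B" unfolding B_def using yx d by linarith
    from approx[OF this, of n] have "\<bar>Pt n y - P y\<bar> \<le> E / (real (Mf n) + 1)" .
    have "\<bar>P y\<bar> \<le> 2 / real (Kf n)"
    proof -
      have h1: "1 / (2 * real (Kf n)) \<le> 1 / real (Kf n)" using Kf0[of n] by (simp add: frac_le)
      have h2: "2 / real (Kf n) = 1 / real (Kf n) + 1 / real (Kf n)" by (simp add: add_divide_distrib[symmetric])
      show ?thesis using h1 h2 \<open>\<bar>Pt n y - P y\<bar> \<le> E / (real (Mf n) + 1)\<close> Ebound[of n] Pt1[OF y_def] by linarith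
    qed
    also have "\<dots> \<le> c / (real n + 1) ^ m"
    proof -
      have "2 \<le> c * real R" using R c by (simp add: divide_le_eq mult.commute)
      then have "2 * (real n + 1) ^ m \<le> c * real (Kf n)" unfolding Kf_def
        by (simp add: add.commute mult.assoc mult_right_mono)
      then show ?thesis using Kf0[of n] by (simp add: divide_simps mult.commute)
    qed
    finally have "c * \<bar>y - x\<bar> ^ m \<le> c / (real n + 1) ^ m" using bnd[OF yx] unfolding P_def by linarith
    then have "\<bar>y - x\<bar> ^ m \<le> (1 / (real n + 1)) ^ m" using c by (simp add: power_divide divide_simps mult.commute)
    moreover obtain m' where "m = Suc m'" using m by (cases m) auto
    ultimately have "\<bar>y - x\<bar> \<le> 1 / (real n + 1)" by (metis power_le_imp_le_base divide_nonneg_nonneg zero_le_one of_nat_0_le_iff add_nonneg_nonneg)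
    then show ?thesis unfolding y_def X_def .
  qed
  show ?thesis
  proof (rule Fc_I[OF nab(1,2) fden], intro allI)
    fix n
    have e1: "real (na [n]) - real (nb [n]) = real_of_int u * real (sf n) + real (jn n)"
      using arg_cong[OF nab(3)[of "[n]"], of real_of_int] by simp
    have e2: "real (Nf n - 1) + 1 = real (Nf n)" using Nf0[of n] by (simp add: of_nat_diff)
    show "\<bar>(real (na [n]) - real (nb [n])) / (real (Nf ([n] ! 0) - 1) + 1) - x\<bar> \<le> 1 / (real n + 1)"
      using main[of n] unfolding e1 by (simp only: nth_Cons_0 e2)
  qed
qed
end
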